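(* Let $\kappa,\theta,\sigma>0$ and $\chi>\gamma>0$ be constants. Define $$\xi:=\sqrt{\kappa^2+2\sigma^2(\chi-\gamma)},\quad \alpha:=\frac{\kappa\theta}{\sigma^2}\Big(1-\frac{\kappa}{\xi}\Big),\quad \beta:=\frac{2\kappa\theta}{\sigma^2},\quad \zeta:=\frac{2\xi}{\sigma^2},\quad \nu:=\frac{\alpha\zeta}{\beta}=\frac{\xi-\kappa}{\sigma^2},$$ and for $r\in(0,\infty)$ let $$u_+(r):=e^{-\nu r}M(\alpha,\beta,\zeta r),\qquad u_-(r):=e^{-\nu r}U(\alpha,\beta,\zeta r).$$ Then $u_+$ is increasing on $(0,\infty)$ and $u_-$ is decreasing on $(0,\infty)$.
   Context: $M$ and $U$ denote the confluent hypergeometric (Kummer) functions of the first and second kind: $M(a,b,z)=\sum_{n\ge 0}\frac{(a)_n}{(b)_n}\frac{z^n}{n!}$ with $(a)_n=a(a+1)\cdots(a+n-1)$ the Pochhammer symbol, and for $a>0$, $U(a,b,z)=\frac{1}{\Gamma(a)}\int_0^\infty e^{-zt}t^{a-1}(1+t)^{b-a-1}\,dt$ for $z>0$. The functions $u_\pm$ are solutions of the ODE $\kappa(\theta-r)u'(r)+\tfrac12\sigma^2 r\,u''(r)-(\chi-\gamma)r\,u(r)=0$ on $(0,\infty)$, arising from a Cox–Ingersoll–Ross process $dR_t=\kappa(\theta-R_t)dt+\sigma\sqrt{R_t}\,dW_t$. *)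

theory Defs
  imports "HOL-Analysis.Analysis"
begin

definition kummerM :: "real \<Rightarrow> real \<Rightarrow> real \<Rightarrow> real" where
  "kummerM a b z = (\<Sum>n. pochhammer a n / pochhammer b n * z ^ n / fact n)"

text \<open>Tricomi's confluent hypergeometric function of the second kind U(a,b,z),
  via its integral representation (for a > 0, z > 0).\<close>
definition kummerU :: "real \<Rightarrow> real \<Rightarrow> real \<Rightarrow> real" where
  "kummerU a b z = (1 / Gamma a) *
     (LBINT t:{0<..}. exp (- z * t) * t powr (a - 1) * (1 + t) powr (b - a - 1))"

end

theory Submission
  imports Defs "HOL-Real_Asymp.Real_Asymp"
begin


lemma U_integrable:
  fixes a p x :: real
  assumes a: "a > 0" and x: "x > 0"
  shows "set_integrable lborel {0<..} (\<lambda>t. exp (- x * t) * t powr (a - 1) * (1 + t) powr p)"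
proof -
  define f where "f = (\<lambda>t::real. exp (- x * t) * t powr (a - 1) * (1 + t) powr p)"
  have "((\<lambda>t. t powr (a-1) * (1+t) powr p * exp (-(x/2)*t)) \<longlongrightarrow> 0) at_top"
    using x by real_asymp
  from order_tendstoD(2)[OF this, of 1]
  have "eventually (\<lambda>t. t powr (a-1) * (1+t) powr p * exp (-(x/2)*t) < 1) at_top" by simp
  from eventually_conj[OF this eventually_gt_at_top[of 0]]
  obtain x0 where x0: "\<And>t. t \<ge> x0 \<Longrightarrow> t powr (a-1) * (1+t) powr p * exp (-(x/2)*t) < 1 \<and> t > 0"
    by (auto simp: eventually_at_top_linorder)
  hence "x0 > 0" by auto
  have big: "f t \<le> exp (-(x/2) * t)" if "t \<ge> x0" for t
  proof -
    have "f t = (t powr (a-1) * (1+t) powr p * exp (-(x/2)*t)) * exp (-(x/2) * t)"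
      unfolding f_def by (simp add: exp_add[symmetric] algebra_simps)
    also have "\<dots> \<le> 1 * exp (-(x/2) * t)"
      using x0[OF that] by (intro mult_right_mono) auto
    finally show ?thesis by simp
  qed
  define K where "K = (1 + x0) powr \<bar>p\<bar>"
  have small: "f t \<le> K * t powr (a - 1)" if "t \<in> {0<..x0}" for t
  proof -
    have "(1 + t) powr p \<le> (1 + t) powr \<bar>p\<bar>"
      using that by (intro powr_mono) auto
    also have "\<dots> \<le> K" unfolding K_def
      using that by (intro powr_mono2) auto
    finally have 1: "(1 + t) powr p \<le> K" .
    have "f t \<le> 1 * t powr (a - 1) * K"
      unfolding f_def using that 1 x
      by (intro mult_mono) (auto intro: mult_nonneg_nonneg)
    thus ?thesis by (simp add: mult.commute)
  qed
  have "f absolutely_integrable_on ({0<..x0} \<union> {x0..})"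
  proof (rule set_integrable_Un)
    show "f absolutely_integrable_on {0<..x0}"
      unfolding set_integrable_def
    proof (rule Bochner_Integration.integrable_bound [OF _ _ AE_I2])
      show "integrable lebesgue (\<lambda>t. indicat_real {0<..x0} t *\<^sub>R (K * t powr (a - 1)))"
        using \<open>x0 > 0\<close> a
        by (intro nonnegative_absolutely_integrable_1 [unfolded set_integrable_def] integrable_on_cmult_left integrable_on_powr_from_0') (auto simp: K_def intro!: integrable_on_powr_from_0')
      show "(\<lambda>t. indicat_real {0<..x0} t *\<^sub>R f t) \<in> borel_measurable lebesgue"
        unfolding f_def by (intro measurable_completion)
           (auto intro!: borel_measurable_continuous_on_indicator continuous_intros)
      fix t :: real
      show "norm (indicator {0<..x0} t *\<^sub>R f t) \<le> norm (indicator {0<..x0} t *\<^sub>R (K * t powr (a - 1)))"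
        using small[of t] by (auto simp: indicator_def f_def K_def)
    qed
  next
    show "f absolutely_integrable_on {x0..}"
      unfolding set_integrable_def
    proof (rule Bochner_Integration.integrable_bound [OF _ _ AE_I2])
      show "integrable lebesgue (\<lambda>t. indicat_real {x0..} t *\<^sub>R exp (- (x / 2) * t))" using x
        by (intro nonnegative_absolutely_integrable_1 [unfolded set_integrable_def] integrable_on_exp_minus_to_infinity) auto
      show "(\<lambda>t. indicat_real {x0..} t *\<^sub>R f t) \<in> borel_measurable lebesgue" using \<open>x0 > 0\<close>
        unfolding f_def by (intro measurable_completion)
           (auto intro!: borel_measurable_continuous_on_indicator continuous_intros)
      fix t :: real
      show "norm (indicator {x0..} t *\<^sub>R f t) \<le> norm (indicator {x0..} t *\<^sub>R exp (-(x/2) * t))"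
        using big[of t] \<open>x0 > 0\<close> by (auto simp: indicator_def f_def)
    qed
  qed auto
  also have "{0<..x0} \<union> {x0..} = {0<..}" using \<open>x0 > 0\<close> by auto
  finally have "set_integrable lebesgue {0<..} f" .
  moreover have "(\<lambda>t. indicat_real {0<..} t *\<^sub>R f t) \<in> borel_measurable lborel"
    unfolding f_def
    by (auto intro!: borel_measurable_continuous_on_indicator continuous_intros)
  ultimately show ?thesis unfolding set_integrable_def f_def
    using integrable_completion by (metis f_def)
qed

lemma not_AE_pos: "\<not> (AE x in lborel. (x::real) \<notin> {0<..})"
proof
  assume "AE x in lborel. (x::real) \<notin> {0<..}"
  hence "AE x in lborel. (x::real) \<notin> {0<..1}" by (rule eventually_mono) auto
  hence "emeasure lborel {0<..(1::real)} = 0"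
    by (subst (asm) AE_iff_measurable[of "{0<..1}"]) auto
  thus False by simp
qed

lemma U_part:
  fixes a b c z :: real
  assumes a: "a > 0" and c: "c > 0" and z: "z > 0"
  shows "strict_antimono_on {0<..} (\<lambda>r. exp (- c * r) * kummerU a b (z * r))"
proof (rule monotone_onI)
  fix r s :: real
  assume r: "r \<in> {0<..}" and s: "s \<in> {0<..}" and rs: "r < s"
  define g where "g = (\<lambda>y t. exp (- c * y) * (exp (- (z * y) * t) * t powr (a - 1) * (1 + t) powr (b - a - 1)))"
  have int: "set_integrable lborel {0<..} (g y)" if "y > 0" for y
    unfolding g_def using U_integrable[of a "z * y" "b - a - 1"] a z that
    by (intro set_integrable_mult_right) auto
  have eq: "exp (- c * y) * kummerU a b (z * y) = (1 / Gamma a) * (LBINT t:{0<..}. g y t)" for y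
    unfolding kummerU_def g_def by simp
  have lt: "g s t < g r t" if "t > 0" for t
  proof -
    have "exp (- c * s) * exp (- (z * s) * t) < exp (- c * r) * exp (- (z * r) * t)"
    proof -
      have "c * r < c * s" using rs c by simp
      moreover have "z * r * t < z * s * t" using rs z that by simp
      ultimately show ?thesis unfolding exp_add[symmetric] by simp
    qed
    moreover have "t powr (a - 1) * (1 + t) powr (b - a - 1) > 0" using that by simp
    ultimately show ?thesis unfolding g_def
      by (metis (no_types, lifting) mult.assoc mult_strict_right_mono)
  qed
  define D where "D = (\<lambda>t. indicator {0<..} t *\<^sub>R (g r t - g s t))"
  have Dint: "integrable lborel D"
    using set_integral_diff(1)[OF int int, of r s] r s unfolding D_def set_integrable_def by auto
  have Dnn: "AE t in lborel. 0 \<le> D t"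
    using lt by (auto simp: D_def indicator_def less_imp_le)
  have "integral\<^sup>L lborel D \<noteq> 0"
  proof
    assume "integral\<^sup>L lborel D = 0"
    hence "AE t in lborel. D t = 0" using integral_nonneg_eq_0_iff_AE[OF Dint Dnn] by simp
    hence "AE t in lborel. (t::real) \<notin> {0<..}"
      by (rule eventually_mono) (use lt in \<open>fastforce simp: D_def\<close>)
    thus False using not_AE_pos by blast
  qed
  moreover have "integral\<^sup>L lborel D \<ge> 0" using Dnn by (rule integral_nonneg_AE)
  ultimately have "integral\<^sup>L lborel D > 0" by simp
  also have "integral\<^sup>L lborel D = (LBINT t:{0<..}. g r t) - (LBINT t:{0<..}. g s t)"
    using set_integral_diff(2)[OF int int, of r s] r s unfolding D_def set_lebesgue_integral_def by auto
  finally have "(LBINT t:{0<..}. g s t) < (LBINT t:{0<..}. g r t)" by simp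
  moreover have "Gamma a > 0" using a by (rule Gamma_real_pos)
  ultimately show "exp (- c * s) * kummerU a b (z * s) < exp (- c * r) * kummerU a b (z * r)"
    unfolding eq by (simp add: divide_strict_right_mono)
qed


definition kc :: "real \<Rightarrow> real \<Rightarrow> nat \<Rightarrow> real" where
  "kc a b n = pochhammer a n / pochhammer b n / fact n"

lemma kummerM_kc: "kummerM a b z = (\<Sum>n. kc a b n * z ^ n)"
  unfolding kummerM_def kc_def by simp

lemma poch_le: 
  fixes a b :: real assumes "0 < a" "a \<le> b" shows "pochhammer a n \<le> pochhammer b n"
proof (induction n)
  case (Suc n)
  show ?case unfolding pochhammer_Suc using Suc assms
    by (intro mult_mono) (auto intro: pochhammer_nonneg)
qed simp

lemma kc_bound:
  assumes "0 < a" "a \<le> b"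
  shows "norm (kc a b n * z ^ n) \<le> inverse (fact n) * norm z ^ n"
proof -
  have "pochhammer a n / pochhammer b n \<le> 1"
    using poch_le[OF assms, of n] pochhammer_pos[of b n] assms by simp
  moreover have "pochhammer a n / pochhammer b n \<ge> 0"
    using pochhammer_pos[of b n] pochhammer_pos[of a n] assms by simp
  ultimately have q: "\<bar>pochhammer a n / pochhammer b n\<bar> \<le> 1" by simp
  have "kc a b n * z ^ n = (pochhammer a n / pochhammer b n) * (inverse (fact n) * z ^ n)"
    unfolding kc_def by (simp add: field_simps)
  also have "norm \<dots> = \<bar>pochhammer a n / pochhammer b n\<bar> * (inverse (fact n) * norm z ^ n)"
    by (simp only: norm_mult norm_power real_norm_def abs_mult abs_inverse power_abs) simp
  also have "\<dots> \<le> 1 * (inverse (fact n) * norm z ^ n)"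
    using q by (intro mult_right_mono) auto
  finally show ?thesis by simp
qed

lemma kc_summable:
  assumes "0 < a" "a \<le> b"
  shows "summable (\<lambda>n. kc a b n * z ^ n)"
  by (rule summable_comparison_test'[OF summable_exp[of "norm z"]]) (use kc_bound[OF assms] in auto)

lemma diffs_kc:
  assumes "0 < a" "0 < b"
  shows "diffs (kc a b) n = a / b * kc (a + 1) (b + 1) n"
proof -
  have "pochhammer b n > 0" "pochhammer (b+1) n > 0" using assms by (auto intro: pochhammer_pos)
  have "diffs (kc a b) n = pochhammer a (Suc n) / pochhammer b (Suc n) / fact n"
    unfolding diffs_def kc_def by (simp add: fact_Suc del: of_nat_Suc)
  also have "\<dots> = a / b * kc (a + 1) (b + 1) n"
    unfolding pochhammer_rec kc_def by simp
  finally show ?thesis .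
qed

lemma kc_mono:
  assumes "0 < a" "a \<le> b"
  shows "kc a b n \<le> kc (a + 1) (b + 1) n"
proof -
  have "pochhammer a n * pochhammer (b+1) n \<le> pochhammer (a+1) n * pochhammer b n"
  proof (induction n)
    case (Suc n)
    have "pochhammer a (Suc n) * pochhammer (b+1) (Suc n)
        = (pochhammer a n * pochhammer (b+1) n) * ((a + n) * (b + 1 + n))"
      by (simp add: pochhammer_Suc algebra_simps)
    also have "\<dots> \<le> (pochhammer (a+1) n * pochhammer b n) * ((a + 1 + n) * (b + n))"
    proof (rule mult_mono[OF Suc])
      show "(a + n) * (b + 1 + n) \<le> (a + 1 + n) * (b + n)"
        using assms by (simp add: algebra_simps)
      show "0 \<le> pochhammer (a + 1) n * pochhammer b n"
        using assms by (intro mult_nonneg_nonneg pochhammer_nonneg) auto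
      show "0 \<le> (a + n) * (b + 1 + n)" using assms by simp
    qed
    also have "\<dots> = pochhammer (a+1) (Suc n) * pochhammer b (Suc n)"
      by (simp add: pochhammer_Suc algebra_simps)
    finally show ?case .
  qed simp
  moreover have "pochhammer b n > 0" "pochhammer (b+1) n > 0" using assms by (auto intro: pochhammer_pos)
  ultimately show ?thesis unfolding kc_def
    by (simp add: divide_right_mono field_simps)
qed

lemma M_less:
  assumes "0 < a" "a < b" "x > 0"
  shows "kummerM a b x < kummerM (a + 1) (b + 1) x"
proof -
  have s1: "summable (\<lambda>n. kc a b n * x ^ n)" using assms by (intro kc_summable) auto
  have s2: "summable (\<lambda>n. kc (a+1) (b+1) n * x ^ n)" using assms by (intro kc_summable) auto
  have "0 < (\<Sum>n. kc (a+1) (b+1) n * x ^ n - kc a b n * x ^ n)"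
  proof (rule suminf_pos2[where i=1])
    show "summable (\<lambda>n. kc (a+1) (b+1) n * x ^ n - kc a b n * x ^ n)"
      using s1 s2 by (rule summable_diff[rotated])
    show "0 \<le> kc (a+1) (b+1) n * x ^ n - kc a b n * x ^ n" for n
      using kc_mono[of a b n] assms by (simp add: mult_right_mono)
    have "a * (b + 1) < (a + 1) * b" using assms by (simp add: algebra_simps)
    hence "a / b < (a + 1) / (b + 1)" using assms by (simp add: field_simps)
    hence "a / b * x < (a + 1) / (b + 1) * x" using assms by (intro mult_strict_right_mono) auto
    thus "0 < kc (a+1) (b+1) 1 * x ^ 1 - kc a b 1 * x ^ 1"
      unfolding kc_def by simp
  qed
  also have "\<dots> = kummerM (a + 1) (b + 1) x - kummerM a b x"
    unfolding kummerM_kc using suminf_diff[OF s2 s1] by simp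
  finally show ?thesis by simp
qed

lemma M_deriv:
  assumes "0 < a" "a \<le> b"
  shows "(kummerM a b has_real_derivative (a / b * kummerM (a + 1) (b + 1) x)) (at x)"
proof -
  have "((\<lambda>x. \<Sum>n. kc a b n * x^n) has_field_derivative (\<Sum>n. diffs (kc a b) n * x^n)) (at x)"
    by (rule termdiffs_strong_converges_everywhere) (use kc_summable[OF assms] in auto)
  moreover have "(\<Sum>n. diffs (kc a b) n * x^n) = a / b * kummerM (a + 1) (b + 1) x"
    unfolding kummerM_kc diffs_kc[OF assms(1) order.strict_trans2[OF assms]] mult.assoc
    by (rule suminf_mult[OF kc_summable]) (use assms in auto)
  ultimately show ?thesis unfolding kummerM_kc[abs_def] by simp
qed

lemma M_part:
  fixes a b z \<nu> :: real
  assumes a: "a > 0" "a < b" and z: "z > 0" and nu: "\<nu> = z * a / b"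
  shows "strict_mono_on {0<..} (\<lambda>r. exp (- \<nu> * r) * kummerM a b (z * r))"
proof (rule strict_mono_onI)
  fix r s :: real
  assume r: "r \<in> {0<..}" and s: "s \<in> {0<..}" and rs: "r < s"
  show "exp (- \<nu> * r) * kummerM a b (z * r) < exp (- \<nu> * s) * kummerM a b (z * s)"
  proof (rule DERIV_pos_imp_increasing[OF rs])
    fix y assume y: "r \<le> y" "y \<le> s"
    hence y0: "y > 0" using r by auto
    have D: "((\<lambda>r. exp (- \<nu> * r) * kummerM a b (z * r)) has_real_derivative
       (exp (- \<nu> * y) * (- \<nu>) * kummerM a b (z * y) + exp (- \<nu> * y) * (a / b * kummerM (a + 1) (b + 1) (z * y) * z))) (at y)"
      using a
      by (auto intro!: derivative_eq_intros DERIV_chain2[OF M_deriv] simp: algebra_simps)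
    have "exp (- \<nu> * y) * (- \<nu>) * kummerM a b (z * y) + exp (- \<nu> * y) * (a / b * kummerM (a + 1) (b + 1) (z * y) * z)
        = \<nu> * exp (- \<nu> * y) * (kummerM (a + 1) (b + 1) (z * y) - kummerM a b (z * y))"
      unfolding nu by (simp add: algebra_simps)
    moreover have "\<nu> > 0" unfolding nu using a z by simp
    moreover have "kummerM (a + 1) (b + 1) (z * y) - kummerM a b (z * y) > 0"
      using M_less[of a b "z * y"] a z y0 by simp
    ultimately show "\<exists>d. ((\<lambda>r. exp (- \<nu> * r) * kummerM a b (z * r)) has_real_derivative d) (at y) \<and> d > 0"
      using D by (intro exI[of _ "\<nu> * exp (- \<nu> * y) * (kummerM (a + 1) (b + 1) (z * y) - kummerM a b (z * y))"]) auto
  qed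
qed

theorem mainTheorem1:
  fixes \<kappa> \<theta> \<sigma> chi \<gamma> :: real
  assumes "\<kappa> > 0" "\<theta> > 0" "\<sigma> > 0" "chi > \<gamma>" "\<gamma> > 0"
  defines "\<xi> \<equiv> sqrt (\<kappa>^2 + 2 * \<sigma>^2 * (chi - \<gamma>))"
  defines "\<alpha> \<equiv> \<kappa> * \<theta> / \<sigma>^2 * (1 - \<kappa> / \<xi>)"
  defines "\<beta> \<equiv> 2 * \<kappa> * \<theta> / \<sigma>^2"
  defines "\<zeta> \<equiv> 2 * \<xi> / \<sigma>^2"
  defines "\<nu> \<equiv> (\<xi> - \<kappa>) / \<sigma>^2"
  shows "strict_mono_on {0<..} (\<lambda>r. exp (- \<nu> * r) * kummerM \<alpha> \<beta> (\<zeta> * r))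
       \<and> strict_antimono_on {0<..} (\<lambda>r. exp (- \<nu> * r) * kummerU \<alpha> \<beta> (\<zeta> * r))"
proof -
  have "\<kappa>^2 < \<kappa>^2 + 2 * \<sigma>^2 * (chi - \<gamma>)" using assms(3,4) by simp
  hence "sqrt (\<kappa>^2) < \<xi>" unfolding \<xi>_def by (rule real_sqrt_less_mono)
  hence xk: "\<kappa> < \<xi>" using assms(1) by simp
  hence xi0: "\<xi> > 0" using assms(1) by simp
  have k1: "0 < 1 - \<kappa> / \<xi>" "1 - \<kappa> / \<xi> < 1" using xk xi0 assms(1) by (auto simp: field_simps)
  have c0: "\<kappa> * \<theta> / \<sigma>^2 > 0" using assms by simp
  have a0: "\<alpha> > 0" unfolding \<alpha>_def using k1 c0 by (intro mult_pos_pos)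
  have "\<alpha> < \<kappa> * \<theta> / \<sigma>^2" unfolding \<alpha>_def using k1 c0 by (metis mult.right_neutral mult_strict_left_mono)
  moreover have "\<kappa> * \<theta> / \<sigma>^2 < \<beta>" unfolding \<beta>_def using c0 by simp
  ultimately have ab: "\<alpha> < \<beta>" by linarith
  have z0: "\<zeta> > 0" unfolding \<zeta>_def using xi0 assms by simp
  have nu: "\<nu> = \<zeta> * \<alpha> / \<beta>"
    unfolding \<nu>_def \<zeta>_def \<alpha>_def \<beta>_def using xi0 assms by (simp add: field_simps power2_eq_square)
  have nu0: "\<nu> > 0" unfolding \<nu>_def using xk assms by simp
  show ?thesis
    using M_part[OF a0 ab z0 nu] U_part[OF a0 nu0 z0, of \<beta>] by blast
qed

end
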